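(* Let $K$ be a positive definite $n\times n$ matrix and $H$ any $n\times n$ complex matrix. For real exponents $p,s$ define, on positive definite $n\times n$ matrices $A$, \[ \psi_p^s(A)=\bigl(K+H^*A^pH\bigr)^s . \] If $-1\le p\le0$ and $-1\le s\le0$, then $\psi_p^s$ is concave, i.e. $\psi_p^s(\lambda A+(1-\lambda)B)\ge\lambda\psi_p^s(A)+(1-\lambda)\psi_p^s(B)$ in the Loewner order for all positive definite $A,B$ and $\lambda\in[0,1]$.
   Context: Powers of positive definite matrices are defined by functional calculus; the Loewner order is $X\ge Y$ iff $X-Y$ is positive semidefinite. *)

theory Defs
  imports "HOL-Analysis.Analysis"
begin

definition adj :: "complex^'n^'m \<Rightarrow> complex^'m^'n" where
  "adj A = (\<chi> i j. cnj (A $ j $ i))"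

definition hermitian :: "complex^'n^'n \<Rightarrow> bool" where
  "hermitian A \<longleftrightarrow> adj A = A"

definition qform :: "complex^'n^'n \<Rightarrow> complex^'n \<Rightarrow> complex" where
  "qform A x = (\<Sum>i\<in>UNIV. cnj (x $ i) * (A *v x) $ i)"

definition psd :: "complex^'n^'n \<Rightarrow> bool" where
  "psd A \<longleftrightarrow> hermitian A \<and> (\<forall>x. 0 \<le> Re (qform A x))"

definition posdef :: "complex^'n^'n \<Rightarrow> bool" where
  "posdef A \<longleftrightarrow> hermitian A \<and> (\<forall>x. x \<noteq> 0 \<longrightarrow> 0 < Re (qform A x))"

definition loewner_le :: "complex^'n^'n \<Rightarrow> complex^'n^'n \<Rightarrow> bool" where
  "loewner_le Y X \<longleftrightarrow> psd (X - Y)"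

definition unitary :: "complex^'n^'n \<Rightarrow> bool" where
  "unitary U \<longleftrightarrow> adj U ** U = mat 1"

definition diagm :: "('n \<Rightarrow> complex) \<Rightarrow> complex^'n^'n" where
  "diagm d = (\<chi> i j. if i = j then d i else 0)"

definition mpow :: "complex^'n^'n \<Rightarrow> real \<Rightarrow> complex^'n^'n" where
  "mpow A p = (SOME M. \<exists>U d. unitary U \<and> (\<forall>i. 0 < d i) \<and>
       A = U ** diagm (\<lambda>i. complex_of_real (d i)) ** adj U \<and>
       M = U ** diagm (\<lambda>i. complex_of_real (d i powr p)) ** adj U)"

definition psi :: "complex^'n^'n \<Rightarrow> complex^'n^'n \<Rightarrow> real \<Rightarrow> real \<Rightarrow> complex^'n^'n \<Rightarrow> complex^'n^'n" where
  "psi K H p s A = mpow (K + adj H ** mpow A p ** H) s"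

end

theory Submission
  imports Defs
begin

definition cinner :: "complex^'n \<Rightarrow> complex^'n \<Rightarrow> complex" where
  "cinner x y = (\<Sum>i\<in>UNIV. cnj (x$i) * y$i)"

lemma qform_cinner: "qform A x = cinner x (A *v x)"
  by (simp add: qform_def cinner_def)

lemma cscaleR: "c *\<^sub>R (z::complex) = complex_of_real c * z"
  by (simp add: scaleR_conv_of_real)

lemma mult_cnj_cmod: "z * cnj z = (complex_of_real (cmod z))^2"
  by (metis complex_norm_square of_real_power)

lemma vec_scaleR_nth[simp]: "(c *\<^sub>R x) $ i = complex_of_real c * (x $ i :: complex)"
  by (simp only: vector_scaleR_component) (simp add: scaleR_conv_of_real)

lemma mat_scaleR_nth[simp]: "(c *\<^sub>R A) $ i $ j = complex_of_real c * (A $ i $ j :: complex)"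
  by (simp only: vector_scaleR_component) (simp add: scaleR_conv_of_real)

lemma adj_nth[simp]: "adj A $ i $ j = cnj (A $ j $ i)"
  by (simp add: adj_def)

lemma adj_adj[simp]: "adj (adj A) = A"
  by (simp add: vec_eq_iff)

lemma adj_mult: "adj (A ** B) = adj B ** adj A"
  by (simp add: vec_eq_iff matrix_matrix_mult_def mult.commute)

lemma adj_add: "adj (A + B) = adj A + adj B"
  by (simp add: vec_eq_iff)

lemma adj_diff: "adj (A - B) = adj A - adj B"
  by (simp add: vec_eq_iff)

lemma adj_scaleR: "adj (c *\<^sub>R A) = c *\<^sub>R adj A"
  by (simp add: vec_eq_iff)

lemma adj_mat1[simp]: "adj (mat 1) = mat 1"
  by (simp add: vec_eq_iff mat_def)

lemma adj_diagm_real: "adj (diagm (\<lambda>i. complex_of_real (d i))) = diagm (\<lambda>i. complex_of_real (d i))"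
  by (simp add: vec_eq_iff diagm_def)

lemma cinner_adj: "cinner x (A *v y) = cinner (adj A *v x) y"
proof -
  have "cinner x (A *v y) = (\<Sum>i\<in>UNIV. \<Sum>j\<in>UNIV. cnj (x$i) * A$i$j * y$j)"
    unfolding cinner_def matrix_vector_mult_def by (simp add: sum_distrib_left mult_ac)
  also have "\<dots> = (\<Sum>j\<in>UNIV. \<Sum>i\<in>UNIV. cnj (x$i) * A$i$j * y$j)"
    by (rule sum.swap)
  also have "\<dots> = cinner (adj A *v x) y"
    unfolding cinner_def matrix_vector_mult_def by (simp add: sum_distrib_right sum_distrib_left mult_ac)
  finally show ?thesis .
qed

lemma cinner_add_right: "cinner x (y + z) = cinner x y + cinner x z"
  by (simp add: cinner_def algebra_simps sum.distrib)
lemma cinner_add_left: "cinner (x + y) z = cinner x z + cinner y z"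
  by (simp add: cinner_def algebra_simps sum.distrib)
lemma cinner_diff_right: "cinner x (y - z) = cinner x y - cinner x z"
  by (simp add: cinner_def algebra_simps sum_subtractf)
lemma cinner_diff_left: "cinner (x - y) z = cinner x z - cinner y z"
  by (simp add: cinner_def algebra_simps sum_subtractf)
lemma cinner_smult_right: "cinner x (c *s y) = c * cinner x y"
  by (simp add: cinner_def sum_distrib_left mult_ac)
lemma cinner_smult_left: "cinner (c *s x) y = cnj c * cinner x y"
  by (simp add: cinner_def sum_distrib_left mult_ac)
lemma scaleR_vec_smult: "c *\<^sub>R (y::complex^'n) = complex_of_real c *s y"
  by (simp add: vec_eq_iff cscaleR)
lemma cinner_scaleR_right: "cinner x (c *\<^sub>R y) = of_real c * cinner x y"
  by (simp add: scaleR_vec_smult cinner_smult_right)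
lemma cinner_scaleR_left: "cinner (c *\<^sub>R x) y = of_real c * cinner x y"
  by (simp add: scaleR_vec_smult cinner_smult_left)
lemma scaleR_mat_mult_vec: "(c *\<^sub>R A) *v (x::complex^'n) = c *\<^sub>R (A *v x)"
  by (simp add: vec_eq_iff matrix_vector_mult_def sum_distrib_left mult_ac cscaleR)
lemma cinner_zero_left[simp]: "cinner 0 y = 0" by (simp add: cinner_def)
lemma cinner_zero_right[simp]: "cinner x 0 = 0" by (simp add: cinner_def)
lemma cinner_sum_right: "finite S \<Longrightarrow> cinner x (sum f S) = (\<Sum>k\<in>S. cinner x (f k))"
  by (induct S rule: finite_induct) (auto simp: cinner_add_right)
lemma cinner_cnj: "cnj (cinner x y) = cinner y x"
  by (simp add: cinner_def mult.commute)

lemma cinner_self: "cinner x x = complex_of_real ((norm x)^2)"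
proof -
  have "(norm x)^2 = (\<Sum>i\<in>UNIV. (norm (x$i))^2)"
    by (simp add: norm_vec_def L2_set_def sum_nonneg)
  then show ?thesis
    by (simp add: cinner_def mult_cnj_cmod mult.commute[of "cnj _"])
qed

lemma cinner_self_eq_0: "cinner x x = 0 \<longleftrightarrow> x = 0"
  by (simp add: cinner_self)

lemma qform_real_herm: "hermitian A \<Longrightarrow> cnj (qform A x) = qform A x"
  unfolding hermitian_def qform_cinner
  by (metis cinner_adj cinner_cnj)

lemma qform_add_mat: "qform (A + B) x = qform A x + qform B x"
  by (simp add: qform_cinner matrix_vector_mult_add_rdistrib cinner_add_right)
lemma qform_diff_mat: "qform (A - B) x = qform A x - qform B x"
  by (simp add: qform_cinner matrix_vector_mult_diff_rdistrib cinner_diff_right)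
lemma qform_scaleR_mat: "qform (c *\<^sub>R A) x = of_real c * qform A x"
  by (simp add: qform_cinner cinner_scaleR_right scaleR_mat_mult_vec)

lemma sum_if_eq_delta: fixes a :: "'b::finite \<Rightarrow> 'a::comm_ring_1" shows "(\<Sum>k\<in>UNIV. (if i = k then a k else 0) * b k) = (a i * b i :: 'a::comm_ring_1)"
proof -
  have "(\<lambda>k. (if i = k then a k else 0) * b k) = (\<lambda>k. if i = k then a k * b k else 0)" by auto
  then show ?thesis by (simp only:) simp
qed

lemma diagm_nth: "diagm d $ i $ j = (if i = j then d i else 0)"
  by (simp add: diagm_def)

lemma mult_diagm_nth: "(W ** diagm d) $ i $ j = W $ i $ j * d j"
  by (simp add: matrix_matrix_mult_def diagm_def if_distrib cong: if_cong)

lemma diagm_mult_nth: "(diagm d ** W) $ i $ j = d i * W $ i $ j"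
  by (simp add: matrix_matrix_mult_def diagm_def sum_if_eq_delta)

lemma diagm_mult_diagm: "diagm a ** diagm b = diagm (\<lambda>i. a i * b i)"
  by (simp add: vec_eq_iff mult_diagm_nth diagm_nth)

lemma diagm_mult_vec: "(diagm d *v x) $ i = d i * x $ i"
  by (simp add: matrix_vector_mult_def diagm_def sum_if_eq_delta)

lemma diagm_one: "diagm (\<lambda>i. 1) = mat 1"
  by (simp add: vec_eq_iff diagm_def mat_def)

lemma unitary_right: "unitary U \<Longrightarrow> U ** adj U = mat 1"
  unfolding unitary_def using matrix_left_right_inverse by blast

lemma unitary_cancel1: fixes X :: "complex^'m::finite^'n::finite" shows "unitary U \<Longrightarrow> adj U ** (U ** X) = X"
  by (simp add: matrix_mul_assoc unitary_def matrix_mul_lid)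
lemma unitary_cancel2: fixes X :: "complex^'m::finite^'n::finite" shows "unitary U \<Longrightarrow> U ** (adj U ** X) = X"
  by (simp add: matrix_mul_assoc unitary_right matrix_mul_lid)
lemma unitary_cancel3: fixes X :: "complex^'n::finite^'m::finite" shows "unitary U \<Longrightarrow> X ** adj U ** U = X"
  by (simp add: matrix_mul_assoc[symmetric] unitary_def)
lemma unitary_cancel4: fixes X :: "complex^'n::finite^'m::finite" shows "unitary U \<Longrightarrow> X ** U ** adj U = X"
  by (simp add: matrix_mul_assoc[symmetric] unitary_right)
lemma unitary_cancel1v: "unitary U \<Longrightarrow> adj U *v (U *v x) = x"
  by (simp add: matrix_vector_mul_assoc unitary_def)
lemma unitary_cancel2v: "unitary U \<Longrightarrow> U *v (adj U *v x) = x"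
  by (simp add: matrix_vector_mul_assoc unitary_right)

lemma qform_spec:
  assumes "unitary U"
  shows "qform (U ** diagm c ** adj U) x = (\<Sum>i\<in>UNIV. c i * complex_of_real ((cmod ((adj U *v x) $ i))^2))"
proof -
  let ?y = "adj U *v x"
  have "qform (U ** diagm c ** adj U) x = cinner x (U *v (diagm c *v ?y))"
    by (simp add: qform_cinner matrix_vector_mul_assoc matrix_mul_assoc)
  also have "\<dots> = cinner ?y (diagm c *v ?y)"
    by (simp add: cinner_adj)
  also have "\<dots> = (\<Sum>i\<in>UNIV. c i * complex_of_real ((cmod (?y $ i))^2))"
    unfolding cinner_def diagm_mult_vec
    by (intro sum.cong refl) (simp add: mult_cnj_cmod mult_ac)
  finally show ?thesis .
qed

lemma hermitian_spec: "hermitian (U ** diagm (\<lambda>i. complex_of_real (d i)) ** adj U)"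
  by (simp add: hermitian_def adj_mult adj_diagm_real matrix_mul_assoc)

lemma spec_unique:
  fixes d e :: "'n::finite \<Rightarrow> real" and f :: "real \<Rightarrow> real"
  assumes U: "unitary U" and V: "unitary V"
    and eq: "U ** diagm (\<lambda>i. complex_of_real (d i)) ** adj U = V ** diagm (\<lambda>i. complex_of_real (e i)) ** adj V"
  shows "U ** diagm (\<lambda>i. complex_of_real (f (d i))) ** adj U = V ** diagm (\<lambda>i. complex_of_real (f (e i))) ** adj V"
proof -
  define W where "W = adj V ** U"
  have "W ** diagm (\<lambda>i. complex_of_real (d i)) = adj V ** (U ** diagm (\<lambda>i. complex_of_real (d i)) ** adj U) ** U"
    using U by (simp add: W_def matrix_mul_assoc unitary_cancel3)
  also have "\<dots> = adj V ** (V ** diagm (\<lambda>i. complex_of_real (e i)) ** adj V) ** U"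
    by (simp add: eq)
  also have "\<dots> = diagm (\<lambda>i. complex_of_real (e i)) ** W"
    using V by (simp add: W_def matrix_mul_assoc unitary_def)
  finally have WD: "W ** diagm (\<lambda>i. complex_of_real (d i)) = diagm (\<lambda>i. complex_of_real (e i)) ** W" .
  have WF: "W ** diagm (\<lambda>i. complex_of_real (f (d i))) = diagm (\<lambda>i. complex_of_real (f (e i))) ** W"
  proof -
    { fix i j
      have "W $ i $ j * complex_of_real (d j) = complex_of_real (e i) * W $ i $ j"
        using arg_cong[OF WD, of "\<lambda>M. M $ i $ j"] by (simp add: mult_diagm_nth diagm_mult_nth)
      then have "W $ i $ j = 0 \<or> d j = e i" by (auto simp: mult.commute)
      then have "W $ i $ j * complex_of_real (f (d j)) = complex_of_real (f (e i)) * W $ i $ j"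
        by (auto simp: mult.commute)
    }
    then show ?thesis by (simp add: vec_eq_iff mult_diagm_nth diagm_mult_nth)
  qed
  have "U ** diagm (\<lambda>i. complex_of_real (f (d i))) ** adj U
      = V ** (W ** diagm (\<lambda>i. complex_of_real (f (d i)))) ** adj U"
    using V by (simp add: W_def matrix_mul_assoc unitary_right)
  also have "\<dots> = V ** (diagm (\<lambda>i. complex_of_real (f (e i))) ** W) ** adj U"
    by (simp add: WF)
  also have "\<dots> = V ** diagm (\<lambda>i. complex_of_real (f (e i))) ** adj V"
    using U by (simp add: W_def matrix_mul_assoc unitary_cancel4)
  finally show ?thesis .
qed

definition sdec :: "complex^'n::finite^'n \<Rightarrow> complex^'n^'n \<Rightarrow> ('n \<Rightarrow> real) \<Rightarrow> bool" where
  "sdec A U d \<longleftrightarrow> unitary U \<and> (\<forall>i. 0 < d i) \<and> A = U ** diagm (\<lambda>i. complex_of_real (d i)) ** adj U"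

lemma mpow_eq:
  assumes "sdec A U d"
  shows "mpow A p = U ** diagm (\<lambda>i. complex_of_real (d i powr p)) ** adj U"
proof -
  have U: "unitary U" and d: "\<forall>i. 0 < d i" and A: "A = U ** diagm (\<lambda>i. complex_of_real (d i)) ** adj U"
    using assms by (auto simp: sdec_def)
  show ?thesis
    unfolding mpow_def
  proof (rule someI2[where a = "U ** diagm (\<lambda>i. complex_of_real (d i powr p)) ** adj U"])
    show "\<exists>U' d'. unitary U' \<and> (\<forall>i. 0 < d' i) \<and> A = U' ** diagm (\<lambda>i. complex_of_real (d' i)) ** adj U' \<and>
       U ** diagm (\<lambda>i. complex_of_real (d i powr p)) ** adj U = U' ** diagm (\<lambda>i. complex_of_real (d' i powr p)) ** adj U'"
      using U d A by blast
  next
    fix M assume "\<exists>V e. unitary V \<and> (\<forall>i. 0 < e i) \<and> A = V ** diagm (\<lambda>i. complex_of_real (e i)) ** adj V \<and>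
       M = V ** diagm (\<lambda>i. complex_of_real (e i powr p)) ** adj V"
    then obtain V e where V: "unitary V" and A': "A = V ** diagm (\<lambda>i. complex_of_real (e i)) ** adj V"
      and M: "M = V ** diagm (\<lambda>i. complex_of_real (e i powr p)) ** adj V" by blast
    show "M = U ** diagm (\<lambda>i. complex_of_real (d i powr p)) ** adj U"
      using spec_unique[OF U V, of d e "\<lambda>x. x powr p"] A A' M by simp
  qed
qed

lemma sdec_mpow: assumes "sdec A U d" shows "sdec (mpow A p) U (\<lambda>i. d i powr p)"
proof -
  have "\<forall>i. d i \<noteq> 0" using assms unfolding sdec_def by (metis less_irrefl)
  then show ?thesis using assms by (simp add: mpow_eq sdec_def)
qed

lemma sdec_hermitian: "sdec A U d \<Longrightarrow> hermitian A"
  by (simp add: sdec_def hermitian_spec)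

lemma qform_sdec: "sdec A U d \<Longrightarrow> qform A x = (\<Sum>i\<in>UNIV. complex_of_real (d i * (cmod ((adj U *v x) $ i))^2))"
  unfolding sdec_def by (auto simp: qform_spec)

lemma Re_qform_sdec: "sdec A U d \<Longrightarrow> Re (qform A x) = (\<Sum>i\<in>UNIV. d i * (cmod ((adj U *v x) $ i))^2)"
  by (simp add: qform_sdec Re_sum)

lemma sdec_posdef: fixes A :: "complex^'n::finite^'n" shows "sdec A U d \<Longrightarrow> posdef A"
proof -
  assume S: "sdec A U d"
  have U: "unitary U" and d: "\<forall>i. 0 < d i" using S by (auto simp: sdec_def)
  { fix x :: "complex^'n" assume "x \<noteq> 0"
    then have "adj U *v x \<noteq> 0" using unitary_cancel2v[OF U, of x] by auto
    then obtain j where j: "(adj U *v x) $ j \<noteq> 0" by (auto simp: vec_eq_iff)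
    have "0 < d j * (cmod ((adj U *v x) $ j))^2" using d j by simp
    also have "\<dots> \<le> (\<Sum>i\<in>UNIV. d i * (cmod ((adj U *v x) $ i))^2)"
    proof (rule member_le_sum)
      fix i show "0 \<le> d i * (cmod ((adj U *v x) $ i))^2" using d[rule_format, of i] by simp
    qed simp_all
    finally have "0 < Re (qform A x)" using Re_qform_sdec[OF S] by simp }
  then show ?thesis using sdec_hermitian[OF S] by (simp add: posdef_def)
qed

lemma mvec_scaleR: "A *v (c *\<^sub>R x) = c *\<^sub>R (A *v (x::complex^'n::finite))"
  by (simp add: vec_eq_iff matrix_vector_mult_def sum_distrib_left mult_ac cscaleR)

lemma mvec_smult: "A *v (c *s x) = c *s (A *v (x::complex^'n::finite))"
  by (simp add: vec_eq_iff matrix_vector_mult_def sum_distrib_left mult_ac)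

lemma real_of_cnj_eq: "cnj z = z \<Longrightarrow> z = complex_of_real (Re z)"
  by (simp add: complex_eq_iff)

lemma herm_cinner: "hermitian A \<Longrightarrow> cinner x (A *v y) = cnj (cinner y (A *v x))"
  by (metis cinner_adj cinner_cnj hermitian_def)

lemma continuous_cinner: "continuous_on S (\<lambda>x. cinner v x)"
  unfolding cinner_def by (intro continuous_intros)

lemma continuous_qform: "continuous_on S (\<lambda>x. Re (qform A x))"
  unfolding qform_def matrix_vector_mult_def by (intro continuous_intros)

lemma st_step:
  fixes A :: "complex^'n::finite^'n" and f :: "nat \<Rightarrow> complex^'n"
  assumes herm: "hermitian A" and kN: "k < CARD('n)"
    and orth: "\<forall>i<k. \<forall>j<k. cinner (f i) (f j) = (if i = j then 1 else 0)"
    and eig: "\<forall>i<k. \<exists>c::real. A *v f i = complex_of_real c *s f i"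
  shows "\<exists>x c. cinner x x = 1 \<and> (\<forall>i<k. cinner (f i) x = 0) \<and> A *v x = complex_of_real c *s x"
proof -
  define W where "W = {x. \<forall>i<k. cinner (f i) x = 0}"
  have "\<not> UNIV \<subseteq> vec.span (f ` {..<k})"
  proof
    assume "UNIV \<subseteq> vec.span (f ` {..<k})"
    then have "vec.dim (UNIV :: (complex^'n) set) \<le> card (f ` {..<k})"
      by (intro vec.dim_le_card) auto
    also have "\<dots> \<le> k" using card_image_le[of "{..<k}" f] by simp
    finally show False using kN by (simp add: card_cart_basis)
  qed
  then obtain y where y: "y \<notin> vec.span (f ` {..<k})" by blast
  define x1 where "x1 = y - (\<Sum>i<k. cinner (f i) y *s f i)"
  have x1W: "x1 \<in> W"
  proof -
    { fix j assume j: "j < k"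
      have "cinner (f j) x1 = cinner (f j) y - (\<Sum>i<k. cinner (f i) y * cinner (f j) (f i))"
        by (simp add: x1_def cinner_diff_right cinner_sum_right cinner_smult_right)
      also have "(\<Sum>i<k. cinner (f i) y * cinner (f j) (f i)) = (\<Sum>i<k. if i = j then cinner (f i) y else 0)"
        using orth j by (intro sum.cong) auto
      also have "\<dots> = cinner (f j) y" using j by simp
      finally have "cinner (f j) x1 = 0" by simp }
    then show ?thesis by (simp add: W_def)
  qed
  have x1nz: "x1 \<noteq> 0"
  proof
    assume "x1 = 0"
    then have "y = (\<Sum>i<k. cinner (f i) y *s f i)" by (simp add: x1_def)
    moreover have "(\<Sum>i<k. cinner (f i) y *s f i) \<in> vec.span (f ` {..<k})"
      by (intro vec.span_sum vec.span_scale vec.span_base) auto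
    ultimately show False using y by simp
  qed
  define S where "S = W \<inter> {x. norm x = 1}"
  have "closed W"
  proof -
    have "W = (\<Inter>i\<in>{..<k}. {x. cinner (f i) x = 0})" by (auto simp: W_def)
    moreover have "closed {x. cinner (f i) x = 0}" for i
      using continuous_closed_preimage_constant[OF continuous_cinner[of UNIV "f i"], of 0] by simp
    ultimately show ?thesis by auto
  qed
  then have "closed S" unfolding S_def
    by (intro closed_Int) (auto intro: closed_Collect_eq continuous_intros)
  moreover have "bounded S" unfolding S_def by (rule bounded_subset[of "cball 0 1"]) auto
  ultimately have "compact S" by (simp add: compact_eq_bounded_closed)
  moreover have "S \<noteq> {}"
  proof -
    have "(1 / norm x1) *\<^sub>R x1 \<in> S"
      using x1W x1nz by (simp add: S_def W_def cinner_scaleR_right)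
    then show ?thesis by blast
  qed
  ultimately obtain x0 where x0S: "x0 \<in> S" and x0max: "\<forall>z\<in>S. Re (qform A z) \<le> Re (qform A x0)"
    using continuous_attains_sup[of S "\<lambda>x. Re (qform A x)"] continuous_qform by blast
  define \<mu> where "\<mu> = Re (qform A x0)"
  have x0W: "x0 \<in> W" and nx0: "norm x0 = 1" using x0S by (auto simp: S_def)
  have cx0: "cinner x0 x0 = 1" using nx0 by (simp add: cinner_self)
  have maxW: "Re (qform A z) \<le> \<mu> * (norm z)^2" if zW: "z \<in> W" for z
  proof (cases "z = 0")
    case True then show ?thesis by (simp add: qform_def)
  next
    case False
    let ?z = "(1 / norm z) *\<^sub>R z"
    have "?z \<in> S" using zW False by (simp add: S_def W_def cinner_scaleR_right)
    then have "Re (qform A ?z) \<le> \<mu>" using x0max by (simp add: \<mu>_def)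
    moreover have "qform A ?z = complex_of_real ((1 / norm z)^2) * qform A z"
      by (simp add: qform_cinner mvec_scaleR cinner_scaleR_left cinner_scaleR_right power2_eq_square)
    ultimately have "(1 / norm z)^2 * Re (qform A z) \<le> \<mu>" by simp
    then show ?thesis using False by (simp add: field_simps)
  qed
  have invW: "A *v z \<in> W" if "z \<in> W" for z
  proof -
    { fix i assume i: "i < k"
      obtain c :: real where c: "A *v f i = complex_of_real c *s f i" using eig i by blast
      have "cinner (f i) (A *v z) = cinner (adj A *v f i) z" by (rule cinner_adj)
      also have "\<dots> = cinner (A *v f i) z" using herm by (simp add: hermitian_def)
      also have "\<dots> = 0" using that i by (simp add: c cinner_smult_left W_def)
      finally have "cinner (f i) (A *v z) = 0" . }
    then show ?thesis by (simp add: W_def)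
  qed
  have qx0: "qform A x0 = complex_of_real \<mu>"
    unfolding \<mu>_def by (rule real_of_cnj_eq[OF qform_real_herm[OF herm]])
  define w where "w = A *v x0 - \<mu> *\<^sub>R x0"
  have wW: "w \<in> W" using invW[OF x0W] x0W
    by (simp add: W_def w_def cinner_diff_right cinner_scaleR_right)
  have x0w: "cinner x0 w = 0"
    using qx0 cx0 by (simp add: w_def cinner_diff_right cinner_scaleR_right qform_cinner)
  have wx0: "cinner w x0 = 0" using x0w cinner_cnj[of x0 w] by simp
  have wAx0: "cinner w (A *v x0) = cinner w w"
  proof -
    have "A *v x0 = w + \<mu> *\<^sub>R x0" by (simp add: w_def)
    then show ?thesis by (simp add: cinner_add_right cinner_scaleR_right wx0)
  qed
  have x0Aw: "cinner x0 (A *v w) = cinner w w"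
    using herm_cinner[OF herm, of x0 w] wAx0 by (simp add: cinner_self)
  have w0: "w = 0"
  proof (rule ccontr)
    assume "w \<noteq> 0"
    define a where "a = (norm w)^2"
    have a: "a > 0" using \<open>w \<noteq> 0\<close> by (simp add: a_def)
    define b where "b = \<mu> * a - Re (qform A w)"
    define e where "e = a / (\<bar>b\<bar> + 1)"
    have e: "e > 0" using a by (simp add: e_def)
    define z where "z = x0 + e *\<^sub>R w"
    have zW: "z \<in> W" using x0W wW by (simp add: z_def W_def cinner_add_right cinner_scaleR_right)
    have cww: "cinner w w = complex_of_real a" by (simp add: a_def cinner_self)
    have "cinner z z = 1 + complex_of_real (e^2 * a)"
      unfolding z_def cinner_add_left cinner_add_right cinner_scaleR_left cinner_scaleR_right
      by (simp add: cx0 x0w wx0 cww power2_eq_square)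
    then have "complex_of_real ((norm z)^2) = complex_of_real (1 + e^2 * a)"
      by (simp only: cinner_self of_real_add of_real_1)
    then have nz: "(norm z)^2 = 1 + e^2 * a" by (simp only: of_real_eq_iff)
    have "qform A z = qform A x0 + complex_of_real e * cinner x0 (A *v w)
        + complex_of_real e * (cinner w (A *v x0) + complex_of_real e * qform A w)"
      by (simp add: z_def qform_cinner matrix_vector_right_distrib mvec_scaleR cinner_add_left
          cinner_add_right cinner_scaleR_left cinner_scaleR_right algebra_simps)
    then have "Re (qform A z) = \<mu> + 2 * e * a + e^2 * Re (qform A w)"
      by (simp add: qx0 x0Aw wAx0 cinner_self a_def power2_eq_square algebra_simps)
    with maxW[OF zW] nz have "\<mu> + 2 * e * a + e^2 * Re (qform A w) \<le> \<mu> * (1 + e^2 * a)" by simp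
    then have "2 * e * a \<le> e^2 * b" by (simp add: b_def algebra_simps)
    then have "2 * a \<le> e * b" using e by (simp add: power2_eq_square)
    also have "e * b \<le> e * \<bar>b\<bar>" using e by (simp add: mult_left_mono)
    finally have "2 * a * (\<bar>b\<bar> + 1) \<le> a * \<bar>b\<bar>" by (simp add: e_def field_simps)
    then have "2 * (a * \<bar>b\<bar>) + 2 * a \<le> a * \<bar>b\<bar>" by (simp add: algebra_simps)
    moreover have "0 \<le> a * \<bar>b\<bar>" using a by simp
    ultimately show False using a by linarith
  qed
  then have "A *v x0 = complex_of_real \<mu> *s x0" by (simp add: w_def scaleR_vec_smult)
  then show ?thesis using cx0 x0W by (auto simp: W_def)
qed

lemma st_build:
  fixes A :: "complex^'n::finite^'n"
  assumes herm: "hermitian A"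
  shows "k \<le> CARD('n) \<Longrightarrow> \<exists>f. (\<forall>i<k. \<forall>j<k. cinner (f i) (f j) = (if i = j then 1 else 0)) \<and>
           (\<forall>i<k. \<exists>c::real. A *v f i = complex_of_real c *s f i)"
proof (induction k)
  case 0 then show ?case by simp
next
  case (Suc k)
  then obtain f where orth: "\<forall>i<k. \<forall>j<k. cinner (f i) (f j) = (if i = j then 1 else 0)"
    and eig: "\<forall>i<k. \<exists>c::real. A *v f i = complex_of_real c *s f i" by auto
  obtain x c where x1: "cinner x x = 1" and xo: "\<forall>i<k. cinner (f i) x = 0"
    and xe: "A *v x = complex_of_real c *s x"
    using st_step[OF herm _ orth eig] Suc.prems by auto
  define g where "g = f(k := x)"
  have "\<forall>i<Suc k. \<forall>j<Suc k. cinner (g i) (g j) = (if i = j then 1 else 0)"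
  proof (intro allI impI)
    fix i j assume i: "i < Suc k" and j: "j < Suc k"
    show "cinner (g i) (g j) = (if i = j then 1 else 0)"
    proof (cases "i = k")
      case True
      then show ?thesis
      proof (cases "j = k")
        case False then have "j < k" using j by simp
        then have "cinner (f j) x = 0" using xo by simp
        then have "cinner x (f j) = 0" using cinner_cnj[of "f j" x] by simp
        then show ?thesis using True False by (simp add: g_def)
      qed (simp add: g_def x1)
    next
      case False
      then have ik: "i < k" using i by simp
      show ?thesis
      proof (cases "j = k")
        case True then show ?thesis using xo ik by (simp add: g_def)
      next
        case False then show ?thesis using orth ik j by (simp add: g_def)
      qed
    qed
  qed
  moreover have "\<forall>i<Suc k. \<exists>c::real. A *v g i = complex_of_real c *s g i"
    using eig xe by (auto simp: g_def less_Suc_eq)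
  ultimately show ?case by blast
qed

lemma spectral:
  fixes A :: "complex^'n::finite^'n"
  assumes pd: "posdef A"
  shows "\<exists>U d. sdec A U d"
proof -
  have herm: "hermitian A" using pd by (simp add: posdef_def)
  obtain f where orth: "\<forall>i<CARD('n). \<forall>j<CARD('n). cinner (f i) (f j) = (if i = j then 1 else 0)"
    and eig: "\<forall>i<CARD('n). \<exists>c::real. A *v f i = complex_of_real c *s f i"
    using st_build[OF herm, of "CARD('n)"] by auto
  obtain lam where lam: "\<forall>i<CARD('n). A *v f i = complex_of_real (lam i) *s f i"
    using eig by metis
  obtain h :: "'n \<Rightarrow> nat" where h: "bij_betw h UNIV {0..<CARD('n)}"
    using ex_bij_betw_finite_nat[of "UNIV :: 'n set"] by auto
  have hlt: "h a < CARD('n)" for a using h by (auto simp: bij_betw_def)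
  have hinj: "h a = h b \<longleftrightarrow> a = b" for a b using h by (auto simp: bij_betw_def inj_on_def)
  define U :: "complex^'n^'n" where "U = (\<chi> r c. f (h c) $ r)"
  define d where "d = (\<lambda>c. lam (h c))"
  have col: "U *v x = (\<Sum>c\<in>UNIV. x $ c *s f (h c))" for x
    by (simp add: vec_eq_iff U_def matrix_vector_mult_def mult.commute)
  have "adj U ** U = mat 1"
  proof -
    { fix a b
      have "(adj U ** U) $ a $ b = cinner (f (h a)) (f (h b))"
        by (simp add: matrix_matrix_mult_def U_def cinner_def)
      also have "\<dots> = (if a = b then 1 else 0)" using orth hlt hinj by simp
      finally have "(adj U ** U) $ a $ b = mat 1 $ a $ b" by (simp add: mat_def) }
    then show ?thesis by (simp add: vec_eq_iff)
  qed
  then have U: "unitary U" by (simp add: unitary_def)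
  have AU: "A ** U = U ** diagm (\<lambda>i. complex_of_real (d i))"
  proof -
    { fix r c
      have "(A ** U) $ r $ c = (A *v f (h c)) $ r"
        by (simp add: matrix_matrix_mult_def matrix_vector_mult_def U_def)
      also have "\<dots> = complex_of_real (d c) * f (h c) $ r" using lam hlt by (simp add: d_def)
      finally have "(A ** U) $ r $ c = (U ** diagm (\<lambda>i. complex_of_real (d i))) $ r $ c"
        by (simp add: mult_diagm_nth U_def mult.commute) }
    then show ?thesis by (simp add: vec_eq_iff)
  qed
  have Aeq: "A = U ** diagm (\<lambda>i. complex_of_real (d i)) ** adj U"
    using unitary_cancel4[OF U, of A] by (simp add: AU)
  have dpos: "0 < d c" for c
  proof -
    have fx: "f (h c) \<noteq> 0" using orth hlt[of c] by (metis cinner_zero_left zero_neq_one)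
    have "qform A (f (h c)) = complex_of_real (d c)"
      using lam hlt[of c] orth by (simp add: qform_cinner d_def cinner_smult_right)
    then show ?thesis using pd fx by (metis Re_complex_of_real posdef_def)
  qed
  show ?thesis using U dpos Aeq by (auto simp: sdec_def)
qed

abbreviation Q :: "complex^'n::finite^'n \<Rightarrow> complex^'n \<Rightarrow> real" where
  "Q A x \<equiv> Re (qform A x)"

lemma cinner_adj_left: "cinner (A *v y) v = cinner y (adj A *v v)"
  by (metis cinner_adj cinner_cnj adj_adj)

lemma cinner_unitary:
  assumes "unitary U"
  shows "cinner z v = (\<Sum>i\<in>UNIV. cnj ((adj U *v z) $ i) * (adj U *v v) $ i)"
proof -
  have "cinner z v = cinner (U *v (adj U *v z)) v" using unitary_cancel2v[OF assms] by simp
  also have "\<dots> = cinner (adj U *v z) (adj U *v v)" by (rule cinner_adj_left)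
  finally show ?thesis by (simp add: cinner_def)
qed

lemma powr_m1: "0 < (x::real) \<Longrightarrow> x powr (-1) = inverse x"
  by (simp add: powr_minus)

lemma scalar_ineq:
  fixes a b :: complex and d :: real
  assumes d: "d > 0"
  shows "2 * Re (cnj a * b) - d * (cmod a)^2 \<le> (cmod b)^2 / d"
proof -
  have "0 \<le> (d * Re a - Re b)^2 + (d * Im a - Im b)^2" by simp
  then have "2 * d * (Re a * Re b + Im a * Im b) - d^2 * ((Re a)^2 + (Im a)^2) \<le> (Re b)^2 + (Im b)^2"
    by (simp add: power2_eq_square algebra_simps)
  then have "d * (2 * (Re a * Re b + Im a * Im b) - d * ((Re a)^2 + (Im a)^2)) \<le> (Re b)^2 + (Im b)^2"
    by (simp add: power2_eq_square algebra_simps)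
  then have "2 * (Re a * Re b + Im a * Im b) - d * ((Re a)^2 + (Im a)^2) \<le> ((Re b)^2 + (Im b)^2) / d"
    using d by (simp add: field_simps)
  then show ?thesis by (simp add: cmod_power2)
qed

lemma KL_ineq:
  assumes S: "sdec X U d"
  shows "2 * Re (cinner z v) - Q X z \<le> Q (mpow X (-1)) v"
proof -
  have U: "unitary U" and dp: "\<forall>i. 0 < d i" using S by (auto simp: sdec_def)
  let ?y = "adj U *v z" and ?u = "adj U *v v"
  have "2 * Re (cinner z v) - Q X z = (\<Sum>i\<in>UNIV. 2 * Re (cnj (?y $ i) * ?u $ i) - d i * (cmod (?y $ i))^2)"
    by (simp add: cinner_unitary[OF U] Re_qform_sdec[OF S] Re_sum sum_subtractf sum_distrib_left)
  also have "\<dots> \<le> (\<Sum>i\<in>UNIV. d i powr (-1) * (cmod (?u $ i))^2)"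
  proof (rule sum_mono)
    fix i
    have "2 * Re (cnj (?y $ i) * ?u $ i) - d i * (cmod (?y $ i))^2 \<le> (cmod (?u $ i))^2 / d i"
      using scalar_ineq dp by blast
    then show "2 * Re (cnj (?y $ i) * ?u $ i) - d i * (cmod (?y $ i))^2 \<le> d i powr (-1) * (cmod (?u $ i))^2"
      using dp by (simp add: powr_m1 divide_inverse mult.commute abs_of_pos)
  qed
  also have "\<dots> = Q (mpow X (-1)) v"
    using Re_qform_sdec[OF sdec_mpow[OF S, of "-1"]] by simp
  finally show ?thesis .
qed

lemma mpow_inv_mult:
  assumes S: "sdec X U d"
  shows "X ** mpow X (-1) = mat 1"
proof -
  have U: "unitary U" and dp: "\<forall>i. 0 < d i" and X: "X = U ** diagm (\<lambda>i. complex_of_real (d i)) ** adj U"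
    using S by (auto simp: sdec_def)
  have "X ** mpow X (-1) = U ** (diagm (\<lambda>i. complex_of_real (d i)) ** diagm (\<lambda>i. complex_of_real (d i powr (-1)))) ** adj U"
    unfolding mpow_eq[OF S] by (subst X) (simp add: matrix_mul_assoc unitary_cancel3[OF U])
  also have "diagm (\<lambda>i. complex_of_real (d i)) ** diagm (\<lambda>i. complex_of_real (d i powr (-1))) = mat 1"
  proof -
    have "(\<lambda>i. complex_of_real (d i) * complex_of_real (d i powr (-1))) = (\<lambda>i. 1)"
    proof
      fix i have "d i > 0" using dp by simp
      then show "complex_of_real (d i) * complex_of_real (d i powr (-1)) = 1"
        by (simp add: powr_m1 flip: of_real_mult)
    qed
    then show ?thesis by (simp add: diagm_mult_diagm diagm_one)
  qed
  finally show ?thesis using unitary_right[OF U] by simp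
qed

lemma KL_eq:
  assumes S: "sdec X U d"
  shows "2 * Re (cinner (mpow X (-1) *v v) v) - Q X (mpow X (-1) *v v) = Q (mpow X (-1)) v"
proof -
  let ?Y = "mpow X (-1)"
  have hY: "hermitian ?Y" using sdec_hermitian[OF sdec_mpow[OF S]] .
  have "qform X (?Y *v v) = cinner (?Y *v v) v"
    by (simp add: qform_cinner matrix_vector_mul_assoc mpow_inv_mult[OF S])
  moreover have "cinner (?Y *v v) v = qform ?Y v"
    using hY by (simp add: qform_cinner cinner_adj_left hermitian_def)
  ultimately show ?thesis by simp
qed

lemma quad_convex:
  assumes psd: "\<forall>z. 0 \<le> Q K z" and t: "0 \<le> t" "t \<le> 1"
  shows "Q K (t *\<^sub>R a + (1 - t) *\<^sub>R b) \<le> t * Q K a + (1 - t) * Q K b"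
proof -
  define c where "c = Re (cinner a (K *v b)) + Re (cinner b (K *v a))"
  have e1: "Q K (t *\<^sub>R a + (1 - t) *\<^sub>R b) = t^2 * Q K a + t * (1 - t) * c + (1 - t)^2 * Q K b"
    unfolding qform_cinner matrix_vector_right_distrib mvec_scaleR cinner_add_left
        cinner_add_right cinner_scaleR_left cinner_scaleR_right
    by (simp add: c_def power2_eq_square algebra_simps)
  have e2: "Q K (a - b) = Q K a - c + Q K b"
    by (simp add: qform_cinner c_def matrix_vector_mult_diff_distrib cinner_diff_left cinner_diff_right)
  have "c \<le> Q K a + Q K b" using psd[rule_format, of "a - b"] e2 by simp
  then have "t * (1 - t) * c \<le> t * (1 - t) * (Q K a + Q K b)"
    using t by (intro mult_left_mono) auto
  then show ?thesis unfolding e1 by (simp add: power2_eq_square algebra_simps)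
qed

lemma JC:
  assumes SA: "sdec A UA dA" and SB: "sdec B UB dB" and SX: "sdec X UX dX"
    and t: "0 \<le> t" "t \<le> 1"
    and H: "\<forall>z. t * Q A z + (1 - t) * Q B z \<le> Q X z"
  shows "Q (mpow X (-1)) (t *\<^sub>R a + (1 - t) *\<^sub>R b) \<le> t * Q (mpow A (-1)) a + (1 - t) * Q (mpow B (-1)) b"
proof -
  define v where "v = t *\<^sub>R a + (1 - t) *\<^sub>R b"
  define z where "z = mpow X (-1) *v v"
  have "Q (mpow X (-1)) v = 2 * Re (cinner z v) - Q X z"
    using KL_eq[OF SX, of v] by (simp add: z_def)
  also have "\<dots> \<le> 2 * Re (cinner z v) - (t * Q A z + (1 - t) * Q B z)"
    using H[rule_format, of z] by simp
  also have "\<dots> = t * (2 * Re (cinner z a) - Q A z) + (1 - t) * (2 * Re (cinner z b) - Q B z)"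
    unfolding v_def cinner_add_right cinner_scaleR_right by (simp add: algebra_simps)
  also have "\<dots> \<le> t * Q (mpow A (-1)) a + (1 - t) * Q (mpow B (-1)) b"
    using t KL_ineq[OF SA, of z a] KL_ineq[OF SB, of z b]
    by (intro add_mono mult_left_mono) auto
  finally show ?thesis by (simp add: v_def)
qed

definition Gm :: "complex^'n::finite^'n \<Rightarrow> complex^'n^'n \<Rightarrow> complex^'n^'n \<Rightarrow> complex^'n^'n" where
  "Gm K H X = mpow (K + adj H ** mpow X (-1) ** H) (-1)"

lemma qform_congr: "qform (adj H ** M ** H) y = qform M (H *v y)"
proof -
  have "qform (adj H ** M ** H) y = cinner y (adj H *v (M *v (H *v y)))"
    by (simp add: qform_cinner matrix_vector_mul_assoc matrix_mul_assoc)
  also have "\<dots> = cinner (H *v y) (M *v (H *v y))" by (simp add: cinner_adj)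
  finally show ?thesis by (simp add: qform_cinner)
qed

lemma posdef_psd: "posdef Y \<Longrightarrow> 0 \<le> Q Y v"
  by (cases "v = 0") (auto simp: posdef_def qform_def intro: less_imp_le)

lemma posdef_M:
  assumes pK: "posdef K" and S: "sdec X U d"
  shows "posdef (K + adj H ** mpow X (-1) ** H)"
proof -
  let ?Y = "mpow X (-1)"
  have pY: "posdef ?Y" using sdec_posdef[OF sdec_mpow[OF S]] .
  have hK: "adj K = K" and hY: "adj ?Y = ?Y" using pK pY by (auto simp: posdef_def hermitian_def)
  have "hermitian (K + adj H ** ?Y ** H)"
    by (simp add: hermitian_def adj_add adj_mult hK hY matrix_mul_assoc)
  moreover have "0 < Q (K + adj H ** ?Y ** H) y" if "y \<noteq> 0" for y
  proof -
    have "0 < Q K y" using pK that by (simp add: posdef_def)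
    moreover have "0 \<le> Q ?Y (H *v y)" by (rule posdef_psd[OF pY])
    ultimately show ?thesis by (simp add: qform_add_mat qform_congr)
  qed
  ultimately show ?thesis by (simp add: posdef_def)
qed

lemma lin_aux: "(c::real) = a \<Longrightarrow> k \<le> ka \<Longrightarrow> q \<le> qa \<Longrightarrow> 2 * a - ka - qa \<le> 2 * c - k - q"
  by linarith

lemma GL:
  assumes pK: "posdef K" and SA: "sdec A UA dA" and SB: "sdec B UB dB" and SX: "sdec X UX dX"
    and t: "0 \<le> t" "t \<le> 1"
    and H: "\<forall>z. t * Q A z + (1 - t) * Q B z \<le> Q X z"
  shows "t * Q (Gm K H A) x + (1 - t) * Q (Gm K H B) x \<le> Q (Gm K H X) x"
proof -
  define MA where "MA = K + adj H ** mpow A (-1) ** H"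
  define MB where "MB = K + adj H ** mpow B (-1) ** H"
  define MX where "MX = K + adj H ** mpow X (-1) ** H"
  obtain VA eA where SMA: "sdec MA VA eA" using spectral posdef_M[OF pK SA] MA_def by blast
  obtain VB eB where SMB: "sdec MB VB eB" using spectral posdef_M[OF pK SB] MB_def by blast
  obtain VX eX where SMX: "sdec MX VX eX" using spectral posdef_M[OF pK SX] MX_def by blast
  define yA where "yA = mpow MA (-1) *v x"
  define yB where "yB = mpow MB (-1) *v x"
  define y where "y = t *\<^sub>R yA + (1 - t) *\<^sub>R yB"
  have eA: "Q (Gm K H A) x = 2 * Re (cinner yA x) - Q K yA - Q (mpow A (-1)) (H *v yA)"
    using KL_eq[OF SMA, of x] by (simp add: Gm_def MA_def yA_def qform_add_mat qform_congr)
  have eB: "Q (Gm K H B) x = 2 * Re (cinner yB x) - Q K yB - Q (mpow B (-1)) (H *v yB)"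
    using KL_eq[OF SMB, of x] by (simp add: Gm_def MB_def yB_def qform_add_mat qform_congr)
  have eX: "2 * Re (cinner y x) - Q K y - Q (mpow X (-1)) (H *v y) \<le> Q (Gm K H X) x"
    using KL_ineq[OF SMX, of y x] by (simp add: Gm_def MX_def qform_add_mat qform_congr)
  have cy: "Re (cinner y x) = t * Re (cinner yA x) + (1 - t) * Re (cinner yB x)"
    unfolding y_def cinner_add_left cinner_scaleR_left by simp
  have qK: "Q K y \<le> t * Q K yA + (1 - t) * Q K yB"
    unfolding y_def by (rule quad_convex[OF _ t]) (use posdef_psd[OF pK] in blast)
  have Hy: "H *v y = t *\<^sub>R (H *v yA) + (1 - t) *\<^sub>R (H *v yB)"
    by (simp add: y_def matrix_vector_right_distrib mvec_scaleR)
  have qX: "Q (mpow X (-1)) (H *v y) \<le> t * Q (mpow A (-1)) (H *v yA) + (1 - t) * Q (mpow B (-1)) (H *v yB)"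
    unfolding Hy by (rule JC[OF SA SB SX t H])
  have "t * Q (Gm K H A) x + (1 - t) * Q (Gm K H B) x
      = 2 * (t * Re (cinner yA x) + (1 - t) * Re (cinner yB x)) - (t * Q K yA + (1 - t) * Q K yB)
        - (t * Q (mpow A (-1)) (H *v yA) + (1 - t) * Q (mpow B (-1)) (H *v yB))"
    unfolding eA eB by (simp add: algebra_simps)
  also have "\<dots> \<le> 2 * Re (cinner y x) - Q K y - Q (mpow X (-1)) (H *v y)"
    by (rule lin_aux[OF cy qK qX])
  also have "\<dots> \<le> Q (Gm K H X) x" by (rule eX)
  finally show ?thesis .
qed

definition kern :: "real \<Rightarrow> real \<Rightarrow> real" where
  "kern r l = indicator {0<..} l * l powr (r - 1) / (1 + l)"

definition Cint :: "real \<Rightarrow> ennreal" where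
  "Cint r = (\<integral>\<^sup>+ l. ennreal (kern r l) \<partial>lborel)"

lemma kern_meas[measurable]: "(\<lambda>l. ennreal (kern r l)) \<in> borel_measurable borel"
  unfolding kern_def by measurable

lemma kern_nonneg: "0 \<le> kern r l"
  by (simp add: kern_def indicator_def)

lemma Cint_fin:
  assumes r: "0 < r" "r < 1"
  shows "Cint r < \<infinity>"
proof -
  have I1: "((\<lambda>x. x powr (r - 1)) has_integral (1 powr (r - 1 + 1) / (r - 1 + 1))) {0..1}"
    using has_integral_powr_from_0[of "r - 1" 1] r by simp
  have I2: "((\<lambda>x. x powr (r - 2)) has_integral (- (1 powr (r - 2 + 1)) / (r - 2 + 1))) {1..}"
    using has_integral_powr_to_inf[of "r - 2" 1] r by simp
  have N1: "(\<integral>\<^sup>+ x. ennreal (indicator {0..1} x * x powr (r - 1)) \<partial>lborel) = ennreal (1 powr (r - 1 + 1) / (r - 1 + 1))"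
    by (rule nn_integral_has_integral_lebesgue[OF _ I1]) simp
  have N2: "(\<integral>\<^sup>+ x. ennreal (indicator {1..} x * x powr (r - 2)) \<partial>lborel) = ennreal (- (1 powr (r - 2 + 1)) / (r - 2 + 1))"
    by (rule nn_integral_has_integral_lebesgue[OF _ I2]) simp
  have "Cint r \<le> (\<integral>\<^sup>+ x. ennreal (indicator {0..1} x * x powr (r - 1)) + ennreal (indicator {1..} x * x powr (r - 2)) \<partial>lborel)"
    unfolding Cint_def
  proof (rule nn_integral_mono)
    fix x :: real
    have "kern r x \<le> indicator {0..1} x * x powr (r - 1) + indicator {1..} x * x powr (r - 2)"
    proof (cases "x \<le> 0")
      case True then show ?thesis by (simp add: kern_def indicator_def)
    next
      case False
      then have x: "x > 0" by simp
      show ?thesis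
      proof (cases "x \<le> 1")
        case True
        have "x powr (r - 1) / (1 + x) \<le> x powr (r - 1)" using x by (simp add: divide_le_eq)
        then show ?thesis using x True by (simp add: kern_def indicator_def)
      next
        case False
        have "x powr (r - 1) / (1 + x) \<le> x powr (r - 1) / x" using x
          by (intro divide_left_mono) auto
        also have "\<dots> = x powr (r - 2)"
        proof -
          have "x powr (r - 2) = x powr ((r - 1) - 1)" by simp
          also have "\<dots> = x powr (r - 1) / x powr 1" by (rule powr_diff)
          finally show ?thesis using x by simp
        qed
        finally show ?thesis using x False by (simp add: kern_def indicator_def)
      qed
    qed
    then show "ennreal (kern r x) \<le> ennreal (indicator {0..1} x * x powr (r - 1)) + ennreal (indicator {1..} x * x powr (r - 2))"
      by (simp add: ennreal_plus[symmetric] del: ennreal_plus)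
  qed
  also have "\<dots> = (\<integral>\<^sup>+ x. ennreal (indicator {0..1} x * x powr (r - 1)) \<partial>lborel) + (\<integral>\<^sup>+ x. ennreal (indicator {1..} x * x powr (r - 2)) \<partial>lborel)"
    by (rule nn_integral_add) measurable
  also have "\<dots> < \<infinity>" unfolding N1 N2 by simp
  finally show ?thesis .
qed

lemma Cint_pos:
  assumes r: "0 < r" "r < 1"
  shows "0 < Cint r"
proof -
  have "(\<integral>\<^sup>+ x. ennreal (1/6) * indicator {1..2::real} x \<partial>lborel) \<le> Cint r"
    unfolding Cint_def
  proof (rule nn_integral_mono)
    fix x :: real
    show "ennreal (1/6) * indicator {1..2} x \<le> ennreal (kern r x)"
    proof (cases "x \<in> {1..2}")
      case True
      then have x1: "1 \<le> x" and x2: "x \<le> 2" by auto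
      have "1 / 2 \<le> x powr (-1)" using x1 x2 by (simp add: powr_m1 field_simps)
      also have "\<dots> \<le> x powr (r - 1)" using x1 r by (intro powr_mono) auto
      finally have a: "1/2 \<le> x powr (r - 1)" .
      have b: "1/3 \<le> 1 / (1 + x)" using x1 x2 by (simp add: field_simps)
      have "1/6 \<le> x powr (r - 1) * (1 / (1 + x))"
        using mult_mono[OF a b] by simp
      then have "1/6 \<le> kern r x" using x1 by (simp add: kern_def indicator_def)
      then show ?thesis using True by (simp add: ennreal_leI)
    qed simp
  qed
  moreover have "(\<integral>\<^sup>+ x. ennreal (1/6) * indicator {1..2::real} x \<partial>lborel) = ennreal (1/6)"
    by (simp add: nn_integral_cmult_indicator)
  moreover have "(0::ennreal) < ennreal (1/6)" by simp
  ultimately show ?thesis by (metis order_less_le_trans)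
qed

lemma Cint_scale:
  assumes d: "0 < d"
  shows "(\<integral>\<^sup>+ l. ennreal (indicator {0<..} l * l powr (r - 1) * (d / (l + d))) \<partial>lborel) = ennreal (d powr r) * Cint r"
proof -
  let ?f = "\<lambda>l::real. ennreal (indicator {0<..} l * l powr (r - 1) * (d / (l + d)))"
  have fm: "?f \<in> borel_measurable borel" by measurable
  have "(\<integral>\<^sup>+ l. ?f l \<partial>lborel) = ennreal \<bar>d\<bar> * (\<integral>\<^sup>+ x. ?f (0 + d * x) \<partial>lborel)"
    using nn_integral_real_affine[OF fm, of d 0] d by simp
  also have "(\<lambda>x. ?f (0 + d * x)) = (\<lambda>x. ennreal (d powr (r - 1)) * ennreal (kern r x))"
  proof
    fix x :: real
    show "?f (0 + d * x) = ennreal (d powr (r - 1)) * ennreal (kern r x)"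
    proof (cases "x > 0")
      case True
      have "(d * x) powr (r - 1) = d powr (r - 1) * x powr (r - 1)"
        using d True by (simp add: powr_mult)
      moreover have "d / (d * x + d) = 1 / (1 + x)"
      proof -
        have "d * x + d = d * (1 + x)" by (simp add: algebra_simps)
        then show ?thesis using d True by simp
      qed
      ultimately have "indicator {0<..} (d * x) * (d * x) powr (r - 1) * (d / (d * x + d)) = d powr (r - 1) * kern r x"
        using d True by (simp add: kern_def indicator_def)
      then show ?thesis by (simp add: ennreal_mult'[symmetric] del: ennreal_mult')
    next
      case False
      then have "\<not> d * x > 0" using d by (simp add: zero_less_mult_iff)
      then show ?thesis using False by (simp add: kern_def indicator_def)
    qed
  qed
  also have "(\<integral>\<^sup>+ x. ennreal (d powr (r - 1)) * ennreal (kern r x) \<partial>lborel) = ennreal (d powr (r - 1)) * Cint r"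
    unfolding Cint_def by (rule nn_integral_cmult) measurable
  also have "ennreal \<bar>d\<bar> * (ennreal (d powr (r - 1)) * Cint r) = ennreal (d powr r) * Cint r"
  proof -
    have "\<bar>d\<bar> * d powr (r - 1) = d powr r"
      using d by (simp add: powr_diff)
    then show ?thesis using d by (simp add: ennreal_mult'[symmetric] mult.assoc[symmetric] del: ennreal_mult')
  qed
  finally show ?thesis .
qed

lemma mat_add_rdistrib: "(A + B) ** C = A ** C + B ** (C::complex^'n::finite^'m::finite)"
  by (simp add: matrix_matrix_mult_def vec_eq_iff distrib_right sum.distrib)

lemma diagm_add: "diagm a + diagm b = diagm (\<lambda>i. a i + b i)"
  by (simp add: vec_eq_iff diagm_def)

lemma scaleR_diagm: "c *\<^sub>R diagm a = diagm (\<lambda>i. complex_of_real c * a i)"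
  by (simp add: vec_eq_iff diagm_def cscaleR)

lemma scaleR_mat1: "c *\<^sub>R (mat 1 :: complex^'n::finite^'n) = diagm (\<lambda>i. complex_of_real c)"
  by (simp add: vec_eq_iff diagm_def mat_def cscaleR)

lemma diagm_const_mult: "diagm (\<lambda>i. complex_of_real c) ** M = c *\<^sub>R (M::complex^'m::finite^'n::finite)"
  by (simp add: vec_eq_iff diagm_mult_nth cscaleR)

lemma mult_diagm_const: "M ** diagm (\<lambda>i. complex_of_real c) = c *\<^sub>R (M::complex^'n::finite^'m::finite)"
  by (simp add: vec_eq_iff mult_diagm_nth mult.commute cscaleR)

lemma scaleR_mid: "c *\<^sub>R (A ** B ** C) = A ** (c *\<^sub>R B) ** (C::complex^'n::finite^'n)"
  by (simp add: scalar_matrix_assoc matrix_scalar_ac)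

lemma mat1_posdef: "posdef (mat 1 :: complex^'n::finite^'n)"
  by (simp add: posdef_def hermitian_def qform_cinner cinner_self)

lemma Glam_sdec:
  assumes S: "sdec X U d" and l: "0 < l"
  shows "sdec (mat 1 + adj (sqrt l *\<^sub>R mat 1) ** mpow X (-1) ** (sqrt l *\<^sub>R mat 1)) U (\<lambda>i. 1 + l / d i)"
proof -
  have U: "unitary U" and dp: "\<forall>i. 0 < d i" using S by (auto simp: sdec_def)
  have "adj (sqrt l *\<^sub>R mat 1) ** mpow X (-1) ** (sqrt l *\<^sub>R mat 1) = (sqrt l * sqrt l) *\<^sub>R mpow X (-1)"
  proof -
    have a: "adj (sqrt l *\<^sub>R mat 1) = (sqrt l *\<^sub>R mat 1 :: complex^'n^'n)" by (simp add: adj_scaleR)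
    show ?thesis unfolding a by (simp add: scaleR_mat1 diagm_const_mult mult_diagm_const)
  qed
  also have "\<dots> = l *\<^sub>R mpow X (-1)" using l by simp
  also have "\<dots> = U ** diagm (\<lambda>i. complex_of_real (l * d i powr (-1))) ** adj U"
    by (simp add: mpow_eq[OF S] scaleR_mid scaleR_diagm)
  finally have e1: "adj (sqrt l *\<^sub>R mat 1) ** mpow X (-1) ** (sqrt l *\<^sub>R mat 1) = U ** diagm (\<lambda>i. complex_of_real (l * d i powr (-1))) ** adj U" .
  have e0: "mat 1 = U ** diagm (\<lambda>i. 1) ** adj U" by (simp add: diagm_one unitary_right[OF U])
  have "mat 1 + adj (sqrt l *\<^sub>R mat 1) ** mpow X (-1) ** (sqrt l *\<^sub>R mat 1)
      = U ** (diagm (\<lambda>i. 1) + diagm (\<lambda>i. complex_of_real (l * d i powr (-1)))) ** adj U"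
    unfolding e1 by (subst e0) (simp add: matrix_add_ldistrib mat_add_rdistrib)
  also have "diagm (\<lambda>i. 1) + diagm (\<lambda>i. complex_of_real (l * d i powr (-1))) = diagm (\<lambda>i. complex_of_real (1 + l / d i))"
  proof -
    have dabs: "\<bar>d i\<bar> = d i" for i using dp by (simp add: abs_of_pos)
    show ?thesis unfolding diagm_add using dp by (simp add: powr_m1 divide_inverse dabs)
  qed
  finally show ?thesis using U dp l by (simp add: sdec_def add_pos_pos)
qed

lemma Glam_Q:
  assumes S: "sdec X U d" and l: "0 < l"
  shows "Q (Gm (mat 1) (sqrt l *\<^sub>R mat 1) X) x = (\<Sum>i\<in>UNIV. (cmod ((adj U *v x) $ i))^2 * (d i / (l + d i)))"
proof -
  have dp: "\<forall>i. 0 < d i" using S by (auto simp: sdec_def)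
  have "Q (Gm (mat 1) (sqrt l *\<^sub>R mat 1) X) x = (\<Sum>i\<in>UNIV. (1 + l / d i) powr (-1) * (cmod ((adj U *v x) $ i))^2)"
    unfolding Gm_def by (rule Re_qform_sdec[OF sdec_mpow[OF Glam_sdec[OF S l]]])
  also have "\<dots> = (\<Sum>i\<in>UNIV. (cmod ((adj U *v x) $ i))^2 * (d i / (l + d i)))"
  proof (rule sum.cong[OF refl])
    fix i
    have di: "0 < d i" using dp by simp
    then have "(1 + l / d i) powr (-1) = d i / (l + d i)"
      using l by (simp add: powr_m1 add_pos_pos field_simps)
    then show "(1 + l / d i) powr (-1) * (cmod ((adj U *v x) $ i))^2 = (cmod ((adj U *v x) $ i))^2 * (d i / (l + d i))"
      by simp
  qed
  finally show ?thesis .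
qed

definition Fk :: "real \<Rightarrow> complex^'n::finite^'n \<Rightarrow> ('n \<Rightarrow> real) \<Rightarrow> complex^'n \<Rightarrow> real \<Rightarrow> real" where
  "Fk r U d x l = (\<Sum>i\<in>UNIV. (cmod ((adj U *v x) $ i))^2 * (indicator {0<..} l * l powr (r - 1) * (d i / (l + d i))))"

lemma Fk_meas[measurable]: "(\<lambda>l. ennreal (Fk r U d x l)) \<in> borel_measurable borel"
  unfolding Fk_def by measurable

lemma Fk_nonneg: assumes "sdec X U d" shows "0 \<le> Fk r U d x l"
proof -
  have dp: "\<forall>i. 0 < d i" using assms by (auto simp: sdec_def)
  have gnn: "0 \<le> indicator {0<..} l * l powr (r - 1) * (d i / (l + d i))" for i
    using dp[rule_format, of i] by (cases "0 < l") (auto simp: indicator_def)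
  show ?thesis unfolding Fk_def
    by (intro sum_nonneg mult_nonneg_nonneg gnn) simp
qed

lemma Fk_eq:
  assumes S: "sdec X U d"
  shows "Fk r U d x l = indicator {0<..} l * l powr (r - 1) * Q (Gm (mat 1) (sqrt l *\<^sub>R mat 1) X) x"
proof (cases "0 < l")
  case True
  then show ?thesis unfolding Glam_Q[OF S True] Fk_def
    by (simp add: sum_distrib_left mult_ac)
qed (simp add: Fk_def indicator_def)

lemma Fk_integral:
  assumes S: "sdec X U d" and r: "0 < r" "r < 1"
  shows "(\<integral>\<^sup>+ l. ennreal (Fk r U d x l) \<partial>lborel) = ennreal (Q (mpow X r) x) * Cint r"
proof -
  have dp: "\<forall>i. 0 < d i" using S by (auto simp: sdec_def)
  let ?w = "\<lambda>i. (cmod ((adj U *v x) $ i))^2"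
  let ?g = "\<lambda>i l. indicator {0<..} l * l powr (r - 1) * (d i / (l + d i))"
  have gnn: "0 \<le> ?g i l" for i l
    using dp[rule_format, of i] by (cases "0 < l") (auto simp: indicator_def)
  have "(\<lambda>l. ennreal (Fk r U d x l)) = (\<lambda>l. \<Sum>i\<in>UNIV. ennreal (?w i) * ennreal (?g i l))"
  proof
    fix l
    have "ennreal (Fk r U d x l) = (\<Sum>i\<in>UNIV. ennreal (?w i * ?g i l))"
      unfolding Fk_def by (rule sum_ennreal[symmetric]) (intro mult_nonneg_nonneg zero_le_power2 gnn)
    also have "\<dots> = (\<Sum>i\<in>UNIV. ennreal (?w i) * ennreal (?g i l))"
      by (intro sum.cong refl ennreal_mult zero_le_power2 gnn)
    finally show "ennreal (Fk r U d x l) = (\<Sum>i\<in>UNIV. ennreal (?w i) * ennreal (?g i l))" .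
  qed
  then have "(\<integral>\<^sup>+ l. ennreal (Fk r U d x l) \<partial>lborel) = (\<Sum>i\<in>UNIV. \<integral>\<^sup>+ l. ennreal (?w i) * ennreal (?g i l) \<partial>lborel)"
    by (simp add: nn_integral_sum)
  also have "\<dots> = (\<Sum>i\<in>UNIV. ennreal (?w i) * (ennreal (d i powr r) * Cint r))"
  proof (rule sum.cong[OF refl])
    fix i
    have "(\<integral>\<^sup>+ l. ennreal (?w i) * ennreal (?g i l) \<partial>lborel) = ennreal (?w i) * (\<integral>\<^sup>+ l. ennreal (?g i l) \<partial>lborel)"
      by (rule nn_integral_cmult) measurable
    also have "(\<integral>\<^sup>+ l. ennreal (?g i l) \<partial>lborel) = ennreal (d i powr r) * Cint r"
      using Cint_scale[of "d i" r] dp by simp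
    finally show "(\<integral>\<^sup>+ l. ennreal (?w i) * ennreal (?g i l) \<partial>lborel) = ennreal (?w i) * (ennreal (d i powr r) * Cint r)" .
  qed
  also have "\<dots> = (\<Sum>i\<in>UNIV. ennreal (d i powr r * ?w i)) * Cint r"
    by (simp add: sum_distrib_right sum_distrib_left ennreal_mult mult_ac)
  also have "\<dots> = ennreal (\<Sum>i\<in>UNIV. d i powr r * ?w i) * Cint r"
    by (subst sum_ennreal) auto
  also have "(\<Sum>i\<in>UNIV. d i powr r * ?w i) = Q (mpow X r) x"
    using Re_qform_sdec[OF sdec_mpow[OF S, of r]] by simp
  finally show ?thesis .
qed

lemma mpow_zero: assumes S: "sdec A U d" shows "mpow A 0 = mat 1"
proof -
  have U: "unitary U" and dp: "\<forall>i. 0 < d i" using S by (auto simp: sdec_def)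
  have "(\<lambda>i. complex_of_real (d i powr 0)) = (\<lambda>i. 1)"
  proof
    fix i show "complex_of_real (d i powr 0) = 1" using dp[rule_format, of i] by simp
  qed
  then show ?thesis using U by (simp add: mpow_eq[OF S] diagm_one unitary_right)
qed

lemma mpow_one: assumes S: "sdec A U d" shows "mpow A 1 = A"
proof -
  have dp: "\<forall>i. 0 < d i" using S by (auto simp: sdec_def)
  have "(\<lambda>i. complex_of_real (d i powr 1)) = (\<lambda>i. complex_of_real (d i))"
  proof
    fix i show "complex_of_real (d i powr 1) = complex_of_real (d i)" using dp[rule_format, of i] by simp
  qed
  then have "mpow A 1 = U ** diagm (\<lambda>i. complex_of_real (d i)) ** adj U"
    unfolding mpow_eq[OF S] by (simp only:)
  then show ?thesis using S by (simp add: sdec_def)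
qed

lemma enn_aux:
  assumes "0 \<le> t" "t \<le> 1" "0 \<le> a" "0 \<le> b" "0 \<le> (c::real)"
  shows "ennreal t * (ennreal a * ennreal c) + ennreal (1 - t) * (ennreal b * ennreal c) = ennreal ((t * a + (1 - t) * b) * c)"
proof -
  have "(t * a + (1 - t) * b) * c = t * (a * c) + (1 - t) * (b * c)" by (simp add: algebra_simps)
  then have "ennreal ((t * a + (1 - t) * b) * c) = ennreal (t * (a * c)) + ennreal ((1 - t) * (b * c))"
    using assms by (simp add: ennreal_plus)
  also have "\<dots> = ennreal t * (ennreal a * ennreal c) + ennreal (1 - t) * (ennreal b * ennreal c)"
    using assms by (simp add: ennreal_mult)
  finally show ?thesis by simp
qed

lemma enn_aux2:
  assumes "0 \<le> t" "t \<le> 1" "0 \<le> a" "0 \<le> (b::real)"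
  shows "ennreal t * ennreal a + ennreal (1 - t) * ennreal b = ennreal (t * a + (1 - t) * b)"
  using enn_aux[OF assms, of 1] by simp

lemma mpow_mpow: assumes S: "sdec A U d" shows "mpow (mpow A a) b = mpow A (a * b)"
  using mpow_eq[OF sdec_mpow[OF S, of a], of b] mpow_eq[OF S, of "a * b"]
  by (simp add: powr_powr)

lemma PL:
  assumes SA: "sdec A UA dA" and SB: "sdec B UB dB" and SX: "sdec X UX dX"
    and t: "0 \<le> t" "t \<le> 1"
    and H: "\<forall>z. t * Q A z + (1 - t) * Q B z \<le> Q X z"
    and r: "0 \<le> r" "r \<le> 1"
  shows "t * Q (mpow A r) x + (1 - t) * Q (mpow B r) x \<le> Q (mpow X r) x"
proof -
  consider "r = 0" | "r = 1" | "0 < r \<and> r < 1" using r by linarith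
  then show ?thesis
  proof cases
    case 1 then show ?thesis
      by (simp add: mpow_zero[OF SA] mpow_zero[OF SB] mpow_zero[OF SX] algebra_simps)
  next
    case 2 then show ?thesis
      using H by (simp add: mpow_one[OF SA] mpow_one[OF SB] mpow_one[OF SX])
  next
    case 3
    then have r0: "0 < r" and r1: "r < 1" by auto
    let ?FA = "Fk r UA dA x" and ?FB = "Fk r UB dB x" and ?FX = "Fk r UX dX x"
    have pt: "t * ?FA l + (1 - t) * ?FB l \<le> ?FX l" for l
    proof (cases "0 < l")
      case True
      let ?H = "sqrt l *\<^sub>R (mat 1 :: complex^'a^'a)"
      have g: "t * Q (Gm (mat 1) ?H A) x + (1 - t) * Q (Gm (mat 1) ?H B) x \<le> Q (Gm (mat 1) ?H X) x"
        by (rule GL[OF mat1_posdef SA SB SX t H])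
      have c: "0 \<le> indicator {0<..} l * l powr (r - 1)" using True by simp
      show ?thesis
        unfolding Fk_eq[OF SA] Fk_eq[OF SB] Fk_eq[OF SX]
        using mult_left_mono[OF g c] by (simp add: algebra_simps)
    next
      case False then show ?thesis by (simp add: Fk_def indicator_def)
    qed
    have nA: "0 \<le> ?FA l" and nB: "0 \<le> ?FB l" for l
      using Fk_nonneg[OF SA] Fk_nonneg[OF SB] by auto
    have "ennreal t * (ennreal (Q (mpow A r) x) * Cint r) + ennreal (1 - t) * (ennreal (Q (mpow B r) x) * Cint r)
        = ennreal t * (\<integral>\<^sup>+ l. ennreal (?FA l) \<partial>lborel) + ennreal (1 - t) * (\<integral>\<^sup>+ l. ennreal (?FB l) \<partial>lborel)"
      by (simp add: Fk_integral[OF SA r0 r1] Fk_integral[OF SB r0 r1])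
    also have "\<dots> = (\<integral>\<^sup>+ l. ennreal t * ennreal (?FA l) + ennreal (1 - t) * ennreal (?FB l) \<partial>lborel)"
      by (simp add: nn_integral_add nn_integral_cmult)
    also have "\<dots> \<le> (\<integral>\<^sup>+ l. ennreal (?FX l) \<partial>lborel)"
    proof (rule nn_integral_mono)
      fix l
      have "ennreal t * ennreal (?FA l) + ennreal (1 - t) * ennreal (?FB l) = ennreal (t * ?FA l + (1 - t) * ?FB l)"
        using enn_aux2[OF t nA nB] .
      also have "\<dots> \<le> ennreal (?FX l)" using pt by (rule ennreal_leI)
      finally show "ennreal t * ennreal (?FA l) + ennreal (1 - t) * ennreal (?FB l) \<le> ennreal (?FX l)" .
    qed
    also have "\<dots> = ennreal (Q (mpow X r) x) * Cint r" by (rule Fk_integral[OF SX r0 r1])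
    finally have ineq: "ennreal t * (ennreal (Q (mpow A r) x) * Cint r) + ennreal (1 - t) * (ennreal (Q (mpow B r) x) * Cint r)
        \<le> ennreal (Q (mpow X r) x) * Cint r" .
    have qA: "0 \<le> Q (mpow A r) x" by (rule posdef_psd[OF sdec_posdef[OF sdec_mpow[OF SA]]])
    have qB: "0 \<le> Q (mpow B r) x" by (rule posdef_psd[OF sdec_posdef[OF sdec_mpow[OF SB]]])
    have qX: "0 \<le> Q (mpow X r) x" by (rule posdef_psd[OF sdec_posdef[OF sdec_mpow[OF SX]]])
    obtain c where c: "Cint r = ennreal c" "0 \<le> c"
      using Cint_fin[OF r0 r1] by (cases "Cint r") auto
    have cpos: "0 < c" using Cint_pos[OF r0 r1] c by simp
    have "ennreal ((t * Q (mpow A r) x + (1 - t) * Q (mpow B r) x) * c) \<le> ennreal (Q (mpow X r) x * c)"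
      using ineq enn_aux[OF t qA qB c(2)] qX c by (simp add: ennreal_mult)
    then have "(t * Q (mpow A r) x + (1 - t) * Q (mpow B r) x) * c \<le> Q (mpow X r) x * c"
      using qX c by (simp add: ennreal_le_iff)
    then show ?thesis using cpos by simp
  qed
qed

lemma psi_eq:
  assumes pK: "posdef K" and S: "sdec A U d"
  shows "psi K H p s A = mpow (Gm K H (mpow A (-p))) (-s)"
proof -
  have "mpow A p = mpow (mpow A (-p)) (-1)" using mpow_mpow[OF S, of "-p" "-1"] by simp
  then have e1: "psi K H p s A = mpow (K + adj H ** mpow (mpow A (-p)) (-1) ** H) s"
    by (simp add: psi_def)
  obtain V e where SM: "sdec (K + adj H ** mpow (mpow A (-p)) (-1) ** H) V e"
    using spectral posdef_M[OF pK sdec_mpow[OF S]] by blast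
  show ?thesis unfolding e1 Gm_def using mpow_mpow[OF SM, of "-1" "-s"] by simp
qed

theorem proposition3p3:
  fixes K H :: "complex^'n^'n" and p s :: real
  assumes "posdef K"
    and "-1 \<le> p" and "p \<le> 0" and "-1 \<le> s" and "s \<le> 0"
  shows "\<forall>A B t. posdef A \<longrightarrow> posdef B \<longrightarrow> 0 \<le> t \<longrightarrow> t \<le> 1 \<longrightarrow>
           loewner_le (t *\<^sub>R psi K H p s A + (1 - t) *\<^sub>R psi K H p s B)
                      (psi K H p s (t *\<^sub>R A + (1 - t) *\<^sub>R B))"
proof (intro allI impI)
  fix A B :: "complex^'n^'n" and t :: real
  assume pA: "posdef A" and pB: "posdef B" and t0: "0 \<le> t" and t1: "t \<le> 1"
  have pK: "posdef K" by fact
  define X where "X = t *\<^sub>R A + (1 - t) *\<^sub>R B"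
  have QX: "Q X z = t * Q A z + (1 - t) * Q B z" for z
    by (simp add: X_def qform_add_mat qform_scaleR_mat)
  have pX: "posdef X"
  proof -
    have "hermitian X" using pA pB
      by (simp add: X_def posdef_def hermitian_def adj_add adj_scaleR)
    moreover have "0 < Q X z" if "z \<noteq> 0" for z
    proof -
      have a: "0 < Q A z" and b: "0 < Q B z" using pA pB that by (auto simp: posdef_def)
      show ?thesis
      proof (cases "t = 0")
        case True then show ?thesis using b by (simp add: QX)
      next
        case False
        then have "0 < t * Q A z" using t0 a by simp
        moreover have "0 \<le> (1 - t) * Q B z" using t1 b by simp
        ultimately show ?thesis by (simp add: QX)
      qed
    qed
    ultimately show ?thesis by (simp add: posdef_def)
  qed
  obtain UA dA where SA: "sdec A UA dA" using spectral[OF pA] by blast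
  obtain UB dB where SB: "sdec B UB dB" using spectral[OF pB] by blast
  obtain UX dX where SX: "sdec X UX dX" using spectral[OF pX] by blast
  have H0: "\<forall>z. t * Q A z + (1 - t) * Q B z \<le> Q X z" by (simp add: QX)
  have r: "0 \<le> -p" "-p \<le> 1" and q: "0 \<le> -s" "-s \<le> 1" using assms by auto
  have H1: "\<forall>z. t * Q (mpow A (-p)) z + (1 - t) * Q (mpow B (-p)) z \<le> Q (mpow X (-p)) z"
    using PL[OF SA SB SX t0 t1 H0 r] by blast
  have H2: "\<forall>z. t * Q (Gm K H (mpow A (-p))) z + (1 - t) * Q (Gm K H (mpow B (-p))) z \<le> Q (Gm K H (mpow X (-p))) z"
    using GL[OF pK sdec_mpow[OF SA] sdec_mpow[OF SB] sdec_mpow[OF SX] t0 t1 H1] by blast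
  have pG: "posdef (Gm K H Y)" if za: "sdec Z U d" and zb: "Y = mpow Z (-p)" for Z Y U d
  proof -
    obtain V e where "sdec (K + adj H ** mpow Y (-1) ** H) V e"
      using spectral posdef_M[OF pK sdec_mpow[OF za]] zb by blast
    then show ?thesis unfolding Gm_def by (rule sdec_posdef[OF sdec_mpow])
  qed
  obtain VA eA where GA: "sdec (Gm K H (mpow A (-p))) VA eA" using spectral pG[OF SA refl] by blast
  obtain VB eB where GB: "sdec (Gm K H (mpow B (-p))) VB eB" using spectral pG[OF SB refl] by blast
  obtain VX eX where GX: "sdec (Gm K H (mpow X (-p))) VX eX" using spectral pG[OF SX refl] by blast
  have H3: "t * Q (psi K H p s A) z + (1 - t) * Q (psi K H p s B) z \<le> Q (psi K H p s X) z" for z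
    unfolding psi_eq[OF pK SA] psi_eq[OF pK SB] psi_eq[OF pK SX]
    by (rule PL[OF GA GB GX t0 t1 H2 q])
  let ?D = "psi K H p s X - (t *\<^sub>R psi K H p s A + (1 - t) *\<^sub>R psi K H p s B)"
  have hA: "adj (psi K H p s A) = psi K H p s A"
    unfolding psi_eq[OF pK SA] using sdec_hermitian[OF sdec_mpow[OF GA]] by (simp add: hermitian_def)
  have hB: "adj (psi K H p s B) = psi K H p s B"
    unfolding psi_eq[OF pK SB] using sdec_hermitian[OF sdec_mpow[OF GB]] by (simp add: hermitian_def)
  have hX: "adj (psi K H p s X) = psi K H p s X"
    unfolding psi_eq[OF pK SX] using sdec_hermitian[OF sdec_mpow[OF GX]] by (simp add: hermitian_def)
  have "hermitian ?D" by (simp add: hermitian_def adj_diff adj_add adj_scaleR hA hB hX)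
  moreover have "0 \<le> Q ?D z" for z
    using H3[of z] by (simp add: qform_diff_mat qform_add_mat qform_scaleR_mat)
  ultimately show "loewner_le (t *\<^sub>R psi K H p s A + (1 - t) *\<^sub>R psi K H p s B) (psi K H p s (t *\<^sub>R A + (1 - t) *\<^sub>R B))"
    by (simp add: loewner_le_def psd_def X_def)
qed

end
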